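(* Let $S\subset\mathbb Z_{\ge1}$. Then $\langle S\rangle_{\mathcal C}$ is the set of all integers of the form $$k+\sum_{j=1}^r(\overline\beta_{b_j}-\overline\beta_{a_j})+s$$ where $r\ge0$, $s\in\mathcal S_\Gamma\cup\{0\}$, $k\in S$, $a_j,b_j\in\{1,\dots,g\}$ and $k\le\overline\beta_{a_1}<\overline\beta_{b_1}\le\overline\beta_{a_2}<\overline\beta_{b_2}\le\cdots\le\overline\beta_{a_r}<\overline\beta_{b_r}$.
   Context: Let $\Gamma$ be a singular irreducible plane branch with multiplicity $n$, Puiseux characteristic exponents $\beta_1<\dots<\beta_g$, $e_0=n$, $e_j=\gcd(e_{j-1},\beta_j)$, $n_j=e_{j-1}/e_j$, $\overline\beta_1=\beta_1$, $\overline\beta_j=n_{j-1}\overline\beta_{j-1}-\beta_{j-1}+\beta_j$ ($2\le j\le g$), and semigroup $\mathcal S_\Gamma$ generated by $n,\overline\beta_1,\dots,\overline\beta_g$. A subset $S\subset\mathbb Z_{>0}$ is a $\mathcal C$-collection if $S+\mathcal S_\Gamma\subset S$ and for all $m\in S$ and $1\le j\le k\le g$ with $m\le\overline\beta_j$, $m+\overline\beta_k-\overline\beta_j\in S$. $\langle S\rangle_{\mathcal C}$ denotes the smallest $\mathcal C$-collection containing $S$. *)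

theory Defs
  imports Main
begin

text \<open>Puiseux data of a singular irreducible plane branch: multiplicity n, genus g,
  characteristic exponents beta 1 < ... < beta g (beta j for 1 \<le> j \<le> g).\<close>

fun ee :: "nat \<Rightarrow> (nat \<Rightarrow> nat) \<Rightarrow> nat \<Rightarrow> nat" where
  "ee n beta 0 = n"
| "ee n beta (Suc j) = gcd (ee n beta j) (beta (Suc j))"

definition nn :: "nat \<Rightarrow> (nat \<Rightarrow> nat) \<Rightarrow> nat \<Rightarrow> nat" where
  "nn n beta j = ee n beta (j - 1) div ee n beta j"

fun betabar :: "nat \<Rightarrow> (nat \<Rightarrow> nat) \<Rightarrow> nat \<Rightarrow> int" where
  "betabar n beta 0 = 0"
| "betabar n beta (Suc 0) = int (beta 1)"
| "betabar n beta (Suc (Suc j)) =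
     int (nn n beta (Suc j)) * betabar n beta (Suc j) - int (beta (Suc j)) + int (beta (Suc (Suc j)))"

definition is_branch_char :: "nat \<Rightarrow> nat \<Rightarrow> (nat \<Rightarrow> nat) \<Rightarrow> bool" where
  "is_branch_char n g beta \<longleftrightarrow>
     2 \<le> n \<and> 1 \<le> g \<and> n < beta 1 \<and>
     (\<forall>j. 1 \<le> j \<and> j < g \<longrightarrow> beta j < beta (Suc j)) \<and>
     (\<forall>j. 1 \<le> j \<and> j \<le> g \<longrightarrow> ee n beta j < ee n beta (j - 1)) \<and>
     ee n beta g = 1"

definition semigrp :: "nat \<Rightarrow> nat \<Rightarrow> (nat \<Rightarrow> nat) \<Rightarrow> int set" where
  "semigrp n g beta = {x. \<exists>c0 (c :: nat \<Rightarrow> nat).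
      x = int c0 * int n + (\<Sum>j = 1..g. int (c j) * betabar n beta j)}"

definition C_collection :: "nat \<Rightarrow> nat \<Rightarrow> (nat \<Rightarrow> nat) \<Rightarrow> int set \<Rightarrow> bool" where
  "C_collection n g beta T \<longleftrightarrow>
     T \<subseteq> {0<..} \<and>
     (\<forall>m \<in> T. \<forall>s \<in> semigrp n g beta. m + s \<in> T) \<and>
     (\<forall>m \<in> T. \<forall>j k. 1 \<le> j \<and> j \<le> k \<and> k \<le> g \<and> m \<le> betabar n beta j \<longrightarrow>
          m + betabar n beta k - betabar n beta j \<in> T)"

definition C_hull :: "nat \<Rightarrow> nat \<Rightarrow> (nat \<Rightarrow> nat) \<Rightarrow> int set \<Rightarrow> int set" where
  "C_hull n g beta S = \<Inter> {T. C_collection n g beta T \<and> S \<subseteq> T}"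

end

theory Submission
  imports Defs
begin

lemma ee_pos: "1 \<le> n \<Longrightarrow> ee n beta j > 0"
  by (induction j) auto

lemma nn_ge2:
  assumes "is_branch_char n g beta" "1 \<le> i" "i \<le> g"
  shows "nn n beta i \<ge> 2"
proof -
  obtain j where i: "i = Suc j" using assms(2) by (cases i) auto
  have pos: "ee n beta i > 0" "ee n beta j > 0" using assms(1) ee_pos unfolding is_branch_char_def by auto
  have lt: "ee n beta i < ee n beta j" using assms unfolding is_branch_char_def i by auto
  have "ee n beta i dvd ee n beta j" unfolding i by simp
  then obtain q where q: "ee n beta j = ee n beta i * q" by (auto simp: dvd_def)
  have "q \<noteq> 0" using q pos by auto
  moreover have "q \<noteq> 1" using q lt by auto
  ultimately have "q \<ge> 2" by arith
  moreover have "nn n beta i = q"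
  proof -
    have "nn n beta i = ee n beta j div ee n beta i" unfolding nn_def i by simp
    also have "\<dots> = q" using q pos by simp
    finally show ?thesis .
  qed
  ultimately show ?thesis by simp
qed

lemma betabar_step: "1 \<le> i \<Longrightarrow> betabar n beta (Suc i) =
   int (nn n beta i) * betabar n beta i - int (beta i) + int (beta (Suc i))"
  by (cases i) auto

lemma bb_pos:
  assumes "is_branch_char n g beta"
  shows "1 \<le> i \<Longrightarrow> i \<le> g \<Longrightarrow> betabar n beta i \<ge> 1 \<and> (i < g \<longrightarrow> 2 * betabar n beta i < betabar n beta (Suc i))"
proof (induction i)
  case 0 then show ?case by simp
next
  case (Suc i)
  have B1: "betabar n beta (Suc i) \<ge> 1"
  proof (cases "i = 0")
    case True then show ?thesis using assms unfolding is_branch_char_def by auto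
  next
    case False
    then have "betabar n beta i \<ge> 1 \<and> 2 * betabar n beta i < betabar n beta (Suc i)"
      using Suc by auto
    then show ?thesis by linarith
  qed
  moreover have "Suc i < g \<longrightarrow> 2 * betabar n beta (Suc i) < betabar n beta (Suc (Suc i))"
  proof
    assume h: "Suc i < g"
    have nn: "int (nn n beta (Suc i)) \<ge> 2" using nn_ge2[OF assms, of "Suc i"] h by simp
    have "int (nn n beta (Suc i)) * betabar n beta (Suc i) \<ge> 2 * betabar n beta (Suc i)"
      using mult_right_mono[OF nn, of "betabar n beta (Suc i)"] B1 by simp
    moreover have "beta (Suc i) < beta (Suc (Suc i))" using assms h unfolding is_branch_char_def by auto
    ultimately show "2 * betabar n beta (Suc i) < betabar n beta (Suc (Suc i))"
      using betabar_step[of "Suc i" n beta] by simp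
  qed
  ultimately show ?case by blast
qed

lemma bb_mono:
  assumes "is_branch_char n g beta" "1 \<le> a" "a \<le> b" "b \<le> g"
  shows "betabar n beta a \<le> betabar n beta b"
  using assms(3,4)
proof (induction b rule: dec_induct)
  case base then show ?case by simp
next
  case (step m)
  then have "betabar n beta m \<ge> 1 \<and> 2 * betabar n beta m < betabar n beta (Suc m)"
    using bb_pos[OF assms(1), of m] assms(2) by auto
  then show ?case using step by auto
qed

lemma bb_key:
  assumes "is_branch_char n g beta" "1 \<le> a" "a < b" "b \<le> g" "1 \<le> c" "c < b"
  shows "betabar n beta a + betabar n beta c < betabar n beta b"
proof -
  obtain p where b: "b = Suc p" using assms by (cases b) auto
  have "betabar n beta a \<le> betabar n beta p" "betabar n beta c \<le> betabar n beta p"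
    using bb_mono[OF assms(1)] assms b by auto
  moreover have "2 * betabar n beta p < betabar n beta b"
    using bb_pos[OF assms(1), of p] assms b by auto
  ultimately show ?thesis by linarith
qed

lemma bb_strict:
  assumes "is_branch_char n g beta" "1 \<le> a" "a < b" "b \<le> g"
  shows "betabar n beta a < betabar n beta b"
  using bb_key[OF assms assms(2,3)] bb_pos[OF assms(1), of a] assms by auto

lemma bb_index:
  assumes "is_branch_char n g beta" "a \<in> {1..g}" "b \<in> {1..g}"
    "betabar n beta a < betabar n beta b"
  shows "a < b"
proof (rule ccontr)
  assume "\<not> a < b"
  then have "betabar n beta b \<le> betabar n beta a" using bb_mono[OF assms(1), of b a] assms by auto
  then show False using assms by simp
qed

lemma semi_nonneg:
  assumes "is_branch_char n g beta" "s \<in> semigrp n g beta"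
  shows "s \<ge> 0"
proof -
  obtain c0 c where s: "s = int c0 * int n + (\<Sum>j = 1..g. int (c j) * betabar n beta j)"
    using assms(2) unfolding semigrp_def by auto
  have "(\<Sum>j = 1..g. int (c j) * betabar n beta j) \<ge> 0"
    by (rule sum_nonneg) (use bb_pos[OF assms(1)] in force)
  then show ?thesis using s by simp
qed

lemma semi_zero: "0 \<in> semigrp n g beta"
  unfolding semigrp_def by (rule CollectI, rule exI[of _ 0], rule exI[of _ "\<lambda>_. 0"]) simp

lemma semi_add:
  assumes "s \<in> semigrp n g beta" "t \<in> semigrp n g beta"
  shows "s + t \<in> semigrp n g beta"
proof -
  obtain c0 c where s: "s = int c0 * int n + (\<Sum>j = 1..g. int (c j) * betabar n beta j)"
    using assms(1) unfolding semigrp_def by auto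
  obtain d0 d where t: "t = int d0 * int n + (\<Sum>j = 1..g. int (d j) * betabar n beta j)"
    using assms(2) unfolding semigrp_def by auto
  have "s + t = int (c0 + d0) * int n + (\<Sum>j = 1..g. int (c j + d j) * betabar n beta j)"
    unfolding s t by (simp add: sum.distrib algebra_simps)
  then show ?thesis unfolding semigrp_def by (intro CollectI exI)
qed

theorem mainTheorem6:
  fixes n g :: nat and beta :: "nat \<Rightarrow> nat" and S :: "int set"
  assumes "is_branch_char n g beta"
    and "S \<subseteq> {1..}"
  shows "C_hull n g beta S =
    {x. \<exists>(r::nat) (a::nat \<Rightarrow> nat) (b::nat \<Rightarrow> nat) k s.
          k \<in> S \<and> s \<in> semigrp n g beta \<and>
          (\<forall>i \<in> {1..r}. a i \<in> {1..g} \<and> b i \<in> {1..g}) \<and>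
          (1 \<le> r \<longrightarrow> k \<le> betabar n beta (a 1)) \<and>
          (\<forall>i \<in> {1..r}. betabar n beta (a i) < betabar n beta (b i)) \<and>
          (\<forall>i. 1 \<le> i \<and> i < r \<longrightarrow> betabar n beta (b i) \<le> betabar n beta (a (Suc i))) \<and>
          x = k + (\<Sum>i = 1..r. betabar n beta (b i) - betabar n beta (a i)) + s}"
  (is "_ = ?R")
proof
  let ?B = "betabar n beta"
  note br = assms(1)
  show "C_hull n g beta S \<subseteq> ?R"
  proof -
    have SR: "S \<subseteq> ?R"
    proof
      fix x assume "x \<in> S"
      then show "x \<in> ?R"
      proof -
        have "x = x + (\<Sum>i = 1..(0::nat). ?B (id i) - ?B (id i)) + 0" by simp
        then show ?thesis using \<open>x \<in> S\<close> semi_zero[of n g beta] by fastforce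
      qed
    qed
    have CR: "C_collection n g beta ?R"
      unfolding C_collection_def
    proof (intro conjI ballI allI impI subsetI)
      fix x assume "x \<in> ?R"
      then obtain r a b k s where H: "k \<in> S" "s \<in> semigrp n g beta"
          "(\<forall>i \<in> {1..r}. a i \<in> {1..g} \<and> b i \<in> {1..g})"
          "(1 \<le> r \<longrightarrow> k \<le> ?B (a 1))"
          "\<forall>i \<in> {1..r}. ?B (a i) < ?B (b i)"
          "(\<forall>i. 1 \<le> i \<and> i < r \<longrightarrow> ?B (b i) \<le> ?B (a (Suc i)))"
          "x = k + (\<Sum>i = 1..r. ?B (b i) - ?B (a i)) + s" by blast
      have "(\<Sum>i = 1..r. ?B (b i) - ?B (a i)) \<ge> 0"
        by (rule sum_nonneg) (use H(5) in force)
      moreover have "k \<ge> 1" using H(1) assms(2) by auto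
      moreover have "s \<ge> 0" using semi_nonneg[OF br H(2)] .
      ultimately show "x \<in> {0<..}" using H(7) by simp
    next
      fix x s' assume "x \<in> ?R" "s' \<in> semigrp n g beta"
      then obtain r a b k s where H: "k \<in> S" "s \<in> semigrp n g beta"
          "(\<forall>i \<in> {1..r}. a i \<in> {1..g} \<and> b i \<in> {1..g})"
          "(1 \<le> r \<longrightarrow> k \<le> ?B (a 1))"
          "\<forall>i \<in> {1..r}. ?B (a i) < ?B (b i)"
          "(\<forall>i. 1 \<le> i \<and> i < r \<longrightarrow> ?B (b i) \<le> ?B (a (Suc i)))"
          "x = k + (\<Sum>i = 1..r. ?B (b i) - ?B (a i)) + s" by blast
      have "s + s' \<in> semigrp n g beta" using semi_add H(2) \<open>s' \<in> _\<close> by blast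
      moreover have "x + s' = k + (\<Sum>i = 1..r. ?B (b i) - ?B (a i)) + (s + s')" using H(7) by simp
      ultimately show "x + s' \<in> ?R" using H by blast
    next
      fix m j k' assume m: "m \<in> ?R" and jk: "1 \<le> j \<and> j \<le> k' \<and> k' \<le> g \<and> m \<le> ?B j"
      show "m + ?B k' - ?B j \<in> ?R"
      proof (cases "j = k'")
        case True then show ?thesis using m by simp
      next
        case False
        then have jlt: "j < k'" using jk by simp
        have Bjk: "?B j < ?B k'" using bb_strict[OF br, of j k'] jk jlt by auto
        from m obtain r a b k s where H: "k \<in> S" "s \<in> semigrp n g beta"
            "(\<forall>i \<in> {1..r}. a i \<in> {1..g} \<and> b i \<in> {1..g})"
            "(1 \<le> r \<longrightarrow> k \<le> ?B (a 1))"
            "\<forall>i \<in> {1..r}. ?B (a i) < ?B (b i)"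
            "(\<forall>i. 1 \<le> i \<and> i < r \<longrightarrow> ?B (b i) \<le> ?B (a (Suc i)))"
            "m = k + (\<Sum>i = 1..r. ?B (b i) - ?B (a i)) + s" by blast
        have k1: "k \<ge> 1" using H(1) assms(2) by auto
        have s0: "s \<ge> 0" using semi_nonneg[OF br H(2)] .
        have sumnn: "\<And>t. (\<Sum>i = 1..t. ?B (b i) - ?B (a i)) \<ge> 0 \<or> t > r"
        proof -
          fix t show "(\<Sum>i = 1..t. ?B (b i) - ?B (a i)) \<ge> 0 \<or> t > r"
          proof (cases "t \<le> r")
            case True
            have "(\<Sum>i = 1..t. ?B (b i) - ?B (a i)) \<ge> 0"
              by (rule sum_nonneg) (use H(5) True in force)
            then show ?thesis by simp
          qed simp
        qed
        have last: "1 \<le> r \<longrightarrow> ?B (b r) \<le> ?B j"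
        proof
          assume r1: "1 \<le> r"
          show "?B (b r) \<le> ?B j"
          proof (rule ccontr)
            assume "\<not> ?thesis"
            then have lt: "?B j < ?B (b r)" by simp
            have br1: "b r \<in> {1..g}" "a r \<in> {1..g}" using H(3) r1 by auto
            have "j < b r" using bb_index[OF br, of j "b r"] jk lt br1 by auto
            have "a r < b r" using bb_index[OF br, of "a r" "b r"] H(5) br1 r1 by auto
            have key: "?B (a r) + ?B j < ?B (b r)"
              using bb_key[OF br, of "a r" "b r" j] br1 jk \<open>j < b r\<close> \<open>a r < b r\<close> by auto
            obtain p where rp: "r = Suc p" using r1 by (cases r) auto
            have "(\<Sum>i = 1..r. ?B (b i) - ?B (a i)) = (\<Sum>i = 1..p. ?B (b i) - ?B (a i)) + (?B (b r) - ?B (a r))"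
              unfolding rp by (simp add: sum.cl_ivl_Suc)
            moreover have "(\<Sum>i = 1..p. ?B (b i) - ?B (a i)) \<ge> 0" using sumnn[of p] rp by auto
            ultimately have "m \<ge> 1 + ?B (b r) - ?B (a r)" using H(7) k1 s0 by linarith
            then show False using key jk by linarith
          qed
        qed
        define a' where "a' = a(Suc r := j)"
        define b' where "b' = b(Suc r := k')"
        have sumeq: "(\<Sum>i = 1..Suc r. ?B (b' i) - ?B (a' i)) = (\<Sum>i = 1..r. ?B (b i) - ?B (a i)) + (?B k' - ?B j)"
        proof -
          have "(\<Sum>i = 1..r. ?B (b' i) - ?B (a' i)) = (\<Sum>i = 1..r. ?B (b i) - ?B (a i))"
            by (rule sum.cong) (auto simp: a'_def b'_def)
          then show ?thesis by (simp add: sum.cl_ivl_Suc a'_def b'_def)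
        qed
        have c1: "\<forall>i \<in> {1..Suc r}. a' i \<in> {1..g} \<and> b' i \<in> {1..g}"
          using H(3) jk by (auto simp: a'_def b'_def)
        have c2: "1 \<le> Suc r \<longrightarrow> k \<le> ?B (a' 1)"
        proof (cases "r = 0")
          case True
          have "(\<Sum>i = 1..r. ?B (b i) - ?B (a i)) = 0" using True by simp
          then have "k \<le> m" using H(7) s0 by simp
          then show ?thesis using True jk by (simp add: a'_def)
        next
          case False
          then show ?thesis using H(4) by (simp add: a'_def)
        qed
        have c3: "\<forall>i \<in> {1..Suc r}. ?B (a' i) < ?B (b' i)"
          using H(5) Bjk by (auto simp: a'_def b'_def)
        have c4: "\<forall>i. 1 \<le> i \<and> i < Suc r \<longrightarrow> ?B (b' i) \<le> ?B (a' (Suc i))"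
        proof (intro allI impI)
          fix i assume i: "1 \<le> i \<and> i < Suc r"
          show "?B (b' i) \<le> ?B (a' (Suc i))"
          proof (cases "i = r")
            case True then show ?thesis using last i by (simp add: a'_def b'_def)
          next
            case False then show ?thesis using H(6) i by (simp add: a'_def b'_def)
          qed
        qed
        have "m + ?B k' - ?B j = k + (\<Sum>i = 1..Suc r. ?B (b' i) - ?B (a' i)) + s"
          using sumeq H(7) by simp
        then show ?thesis using H(1,2) c1 c2 c3 c4 by blast
      qed
    qed
    show ?thesis unfolding C_hull_def using SR CR by (intro Inter_lower) blast
  qed
next
  let ?B = "betabar n beta"
  note br = assms(1)
  show "?R \<subseteq> C_hull n g beta S"
    unfolding C_hull_def
  proof (rule Inter_greatest)
    fix T assume "T \<in> {T. C_collection n g beta T \<and> S \<subseteq> T}"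
    then have CT: "C_collection n g beta T" and ST: "S \<subseteq> T" by auto
    show "?R \<subseteq> T"
    proof
      fix x assume "x \<in> ?R"
      then obtain r a b k s where H: "k \<in> S" "s \<in> semigrp n g beta"
          "(\<forall>i \<in> {1..r}. a i \<in> {1..g} \<and> b i \<in> {1..g})"
          "(1 \<le> r \<longrightarrow> k \<le> ?B (a 1))"
          "\<forall>i \<in> {1..r}. ?B (a i) < ?B (b i)"
          "(\<forall>i. 1 \<le> i \<and> i < r \<longrightarrow> ?B (b i) \<le> ?B (a (Suc i)))"
          "x = k + (\<Sum>i = 1..r. ?B (b i) - ?B (a i)) + s" by blast
      define X where "X t = k + (\<Sum>i = 1..t. ?B (b i) - ?B (a i))" for t
      have ind: "t \<le> r \<Longrightarrow> X t \<in> T \<and> (t < r \<longrightarrow> X t \<le> ?B (a (Suc t)))" for t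
      proof (induction t)
        case 0
        then show ?case using H(1,4) ST by (auto simp: X_def)
      next
        case (Suc t)
        then have IH: "X t \<in> T" "X t \<le> ?B (a (Suc t))" by auto
        have ab: "a (Suc t) \<in> {1..g}" "b (Suc t) \<in> {1..g}" "?B (a (Suc t)) < ?B (b (Suc t))"
          using H(3,5) Suc.prems by auto
        have "a (Suc t) < b (Suc t)" using bb_index[OF br] ab by blast
        have XS: "X (Suc t) = X t + ?B (b (Suc t)) - ?B (a (Suc t))"
          by (simp add: X_def sum.cl_ivl_Suc)
        have "X (Suc t) \<in> T"
          using CT IH ab \<open>a (Suc t) < b (Suc t)\<close> unfolding C_collection_def XS by auto
        moreover have "Suc t < r \<longrightarrow> X (Suc t) \<le> ?B (a (Suc (Suc t)))"
          using H(6) IH XS by force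
        ultimately show ?case by blast
      qed
      have "X r \<in> T" using ind by auto
      then have "X r + s \<in> T" using CT H(2) unfolding C_collection_def by auto
      then show "x \<in> T" using H(7) by (simp add: X_def)
    qed
  qed
qed

end
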